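(* Let $p(\cdot)\in\mathcal P^{\log}_\pm(\mathbb B)$ and let $q$ be a constant with $q>p_++1$. There exists a constant $C>0$ depending only on $p(\cdot)$ (and $n,\alpha,q$) such that for every weight $w$, $$[w]_{B_q}\le C[w]_{B^+_{p(\cdot)}}.$$ In particular $B^+_{p(\cdot)}\subset B_q$.
   Context: $\mathbb B$ unit ball of $\mathbb C^n$, $\alpha>0$, $d\mu_\alpha(z)=(1-|z|^2)^{\alpha-1}d\mu(z)$ ($\mu$ Lebesgue measure). Pseudo-distance $d(z,\zeta)=\big||z|-|\zeta|\big|+\big|1-\frac{\langle z,\zeta\rangle}{|z||\zeta|}\big|$ ($z,\zeta\neq0$), $d(z,\zeta)=|z|+|\zeta|$ otherwise; pseudo-balls $B(z,r)=\{\zeta:d(z,\zeta)<r\}$; $\mathcal B$ is the set of pseudo-balls $B(z,r)$ with $r>1-|z|$ (those whose closure meets $\partial\mathbb B$). A weight is a non-negative locally integrable function; $w(B)=\int_Bw\,d\mu_\alpha$. $\mathcal P^{\log}_\pm(\mathbb B)$: measurable $p$ with $p_-:=\operatorname{ess\,inf}p>1$ and $|p(z)-p(\zeta)|\le c/\ln(e+1/d(z,\zeta))$ for some $c$ and all $z\neq\zeta$; $p_+=\operatorname{ess\,sup}p$, $1/p+1/p'=1$. For an exponent $r(\cdot)$ with $0<r_-\le r_+<\infty$, $\|f\|_{r(\cdot)}=\inf\{\lambda>0:\int_{\mathbb B}|f/\lambda|^{r(z)}d\mu_\alpha\le1\}$. $p_B=\big(\frac1{\mu_\alpha(B)}\int_B\frac1{p}d\mu_\alpha\big)^{-1}$.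 $[w]_{B^+_{p(\cdot)}}=\sup_{B\in\mathcal B}\mu_\alpha(B)^{-p_B}\,w(B)\,\|w^{-1}\chi_B\|_{p'(\cdot)/p(\cdot)}$. For constant $q>1$, $[w]_{B_q}=\sup_{B\in\mathcal B}\big(\frac{1}{\mu_\alpha(B)}\int_Bw\,d\mu_\alpha\big)\big(\frac1{\mu_\alpha(B)}\int_Bw^{-1/(q-1)}d\mu_\alpha\big)^{q-1}$, and $B_q$, $B^+_{p(\cdot)}$ are the classes of weights where these are finite. *)

theory Defs
  imports "HOL-Probability.Probability"
begin

text \<open>Points of C^n are vectors of type complex^'n; 'n is a finite index type, n = CARD('n).
  The unit ball is ball 0 1 (norm = Euclidean norm).\<close>

definition cinner :: "complex^'n \<Rightarrow> complex^'n \<Rightarrow> complex" where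
  "cinner z u = (\<Sum>i\<in>UNIV. z$i * cnj (u$i))"

definition pdist :: "complex^'n \<Rightarrow> complex^'n \<Rightarrow> real" where
  "pdist z u = (if z \<noteq> 0 \<and> u \<noteq> 0
     then \<bar>norm z - norm u\<bar> + cmod (1 - cinner z u / complex_of_real (norm z * norm u))
     else norm z + norm u)"

definition pball :: "complex^'n \<Rightarrow> real \<Rightarrow> (complex^'n) set" where
  "pball z r = {u \<in> ball 0 1. pdist z u < r}"

text \<open>The family of pseudo-balls whose closure meets the boundary.\<close>
definition bdry_balls :: "(complex^'n) set set" where
  "bdry_balls = {pball z r | z r. z \<in> ball 0 1 \<and> r > 1 - norm z}"

definition mu_alpha :: "real \<Rightarrow> (complex^'n) measure" where
  "mu_alpha \<alpha> = density lebesgue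
     (\<lambda>z. indicator (ball 0 1) z * ennreal ((1 - (norm z)\<^sup>2) powr (\<alpha> - 1)))"

definition essinf :: "'a measure \<Rightarrow> ('a \<Rightarrow> real) \<Rightarrow> ereal" where
  "essinf M f = - esssup M (\<lambda>x. - ereal (f x))"

definition esup :: "'a measure \<Rightarrow> ('a \<Rightarrow> real) \<Rightarrow> ereal" where
  "esup M f = esssup M (\<lambda>x. ereal (f x))"

definition Plog :: "real \<Rightarrow> (complex^'n \<Rightarrow> real) \<Rightarrow> bool" where
  "Plog \<alpha> p \<longleftrightarrow> p \<in> borel_measurable (mu_alpha \<alpha>) \<and> essinf (mu_alpha \<alpha>) p > 1 \<and>
     (\<exists>c. \<forall>z\<in>ball 0 1. \<forall>u\<in>ball 0 1. z \<noteq> u \<longrightarrow>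
        \<bar>p z - p u\<bar> \<le> c / ln (exp 1 + 1 / pdist z u))"

definition weight :: "(complex^'n \<Rightarrow> real) \<Rightarrow> bool" where
  "weight w \<longleftrightarrow> w \<in> borel_measurable lebesgue \<and> (\<forall>z. 0 \<le> w z) \<and>
     (\<forall>K. compact K \<and> K \<subseteq> ball 0 1 \<longrightarrow> set_integrable lebesgue K w)"

text \<open>Real power on extended non-negative reals (for positive exponents; top maps to top).\<close>
definition epowr :: "ennreal \<Rightarrow> real \<Rightarrow> ennreal" where
  "epowr x a = (if x = top then top else ennreal (enn2real x powr a))"

definition vnorm :: "'a measure \<Rightarrow> ('a \<Rightarrow> real) \<Rightarrow> ('a \<Rightarrow> ennreal) \<Rightarrow> ennreal" where
  "vnorm M r f = Inf {ennreal l | l. l > 0 \<and> (\<integral>\<^sup>+ z. epowr (f z / ennreal l) (r z) \<partial>M) \<le> 1}"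

definition wmeas :: "real \<Rightarrow> (complex^'n \<Rightarrow> real) \<Rightarrow> (complex^'n) set \<Rightarrow> ennreal" where
  "wmeas \<alpha> w B = (\<integral>\<^sup>+ z\<in>B. ennreal (w z) \<partial>mu_alpha \<alpha>)"

definition winv :: "(complex^'n \<Rightarrow> real) \<Rightarrow> complex^'n \<Rightarrow> ennreal" where
  "winv w z = (if w z = 0 then top else ennreal (1 / w z))"

definition harm_mean :: "real \<Rightarrow> (complex^'n \<Rightarrow> real) \<Rightarrow> (complex^'n) set \<Rightarrow> real" where
  "harm_mean \<alpha> p B = inverse ((1 / measure (mu_alpha \<alpha>) B) *
                        (LINT z:B|mu_alpha \<alpha>. 1 / p z))"

definition conj_exp :: "(complex^'n \<Rightarrow> real) \<Rightarrow> complex^'n \<Rightarrow> real" where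
  "conj_exp p z = p z / (p z - 1)"

definition Bplus_const :: "real \<Rightarrow> (complex^'n \<Rightarrow> real) \<Rightarrow> (complex^'n \<Rightarrow> real) \<Rightarrow> ennreal" where
  "Bplus_const \<alpha> p w = (SUP B\<in>bdry_balls.
      ennreal (measure (mu_alpha \<alpha>) B powr (- harm_mean \<alpha> p B)) * wmeas \<alpha> w B *
      vnorm (mu_alpha \<alpha>) (\<lambda>z. conj_exp p z / p z) (\<lambda>z. indicator B z * winv w z))"

definition Bq_const :: "real \<Rightarrow> real \<Rightarrow> (complex^'n \<Rightarrow> real) \<Rightarrow> ennreal" where
  "Bq_const \<alpha> q w = (SUP B\<in>bdry_balls.
      (wmeas \<alpha> w B / emeasure (mu_alpha \<alpha>) B) *
      epowr ((\<integral>\<^sup>+ z\<in>B. epowr (winv w z) (1 / (q - 1)) \<partial>mu_alpha \<alpha>) / emeasure (mu_alpha \<alpha>) B)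
            (q - 1))"

end

theory Submission
  imports Defs
begin

lemma sets_mu_alpha[simp, measurable_cong]: "sets (mu_alpha a) = sets lebesgue"
  by (simp add: mu_alpha_def)
lemma space_mu_alpha[simp]: "space (mu_alpha a) = UNIV"
  by (simp add: mu_alpha_def)

lemma dens_meas[measurable]:
  "(\<lambda>z::complex^'n. indicator (ball 0 1) z * ennreal ((1 - (norm z)\<^sup>2) powr (a - 1))) \<in> borel_measurable lebesgue"
proof -
  have [measurable]: "ball (0::complex^'n) 1 \<in> sets borel" by (simp add: borel_open)
  have "(\<lambda>z::complex^'n. indicator (ball 0 1) z * ennreal ((1 - (norm z)\<^sup>2) powr (a - 1))) \<in> borel_measurable borel"
    by measurable
  thus ?thesis by (intro measurable_completion) simp
qed

lemma emeasure_mu_alpha: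
  "A \<in> sets lebesgue \<Longrightarrow> emeasure (mu_alpha a) A =
     (\<integral>\<^sup>+ z. indicator (ball 0 1) z * ennreal ((1 - (norm z)\<^sup>2) powr (a - 1)) * indicator A z \<partial>lebesgue)"
  unfolding mu_alpha_def by (subst emeasure_density) (auto simp: nn_integral_set_ennreal)

lemma ennreal_le_suminf: "(f::nat \<Rightarrow> ennreal) k \<le> suminf f"
  using sum_le_suminf[OF summableI, of "{k}" f] by simp

lemma Bern_aux:
  fixes a :: real and d :: nat
  assumes "0 \<le> a" "a \<le> 1"
  shows "1 - real d * (1 - a) \<le> a ^ d"
  using Bernoulli_inequality[of "a - 1" d] assms by (simp add: algebra_simps)

lemma mu_alpha_finite:
  assumes "a > 0"
  shows "emeasure (mu_alpha a) (UNIV :: (complex^'n) set) < \<infinity>"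
proof -
  define \<gamma> where "\<gamma> = max 0 (1 - a)"
  have g0: "0 \<le> \<gamma>" and g1: "\<gamma> < 1" using assms by (auto simp: \<gamma>_def)
  define d where "d = DIM(complex^'n)"
  define U where "U = emeasure lebesgue (ball (0::complex^'n) 1)"
  have Ufin: "U < \<infinity>" unfolding U_def using emeasure_bounded_finite[of "ball (0::complex^'n) 1"] by simp
  define V where "V = enn2real U"
  have UV: "U = ennreal V" using Ufin by (simp add: V_def ennreal_enn2real_if)
  have V0: "V \<ge> 0" by (simp add: V_def)
  have bvol: "emeasure lebesgue (ball (0::complex^'n) r) = ennreal (r^d * V)" if "r \<ge> 0" for r
    using emeasure_lebesgue_ball_conv_unit_ball[OF that, of "0::complex^'n"] that V0
    unfolding U_def[symmetric] UV d_def by (metis ennreal_mult zero_le_power)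
  define A :: "nat \<Rightarrow> (complex^'n) set" where
    "A k = ball 0 (1 - (1/2)^(k+1)) - ball 0 (1 - (1/2)^k)" for k
  define D where "D = (\<lambda>z::complex^'n. indicator (ball 0 1) z * ennreal ((1 - (norm z)\<^sup>2) powr (a - 1)))"
  have Ameas[measurable]: "A k \<in> sets lebesgue" for k unfolding A_def by auto
  have pt: "D z \<le> (\<Sum>k. ennreal (2 powr ((k+1) * \<gamma>)) * indicator (A k) z)" for z
  proof (cases "z \<in> ball 0 1")
    case False then show ?thesis by (simp add: D_def)
  next
    case True
    hence nz: "norm z < 1" by simp
    define k where "k = nat \<lfloor>log 2 (1 / (1 - norm z))\<rfloor>"
    have lg0: "log 2 (1 / (1 - norm z)) \<ge> 0" using nz by simp
    have k1: "real k \<le> log 2 (1 / (1 - norm z))" unfolding k_def using lg0 by linarith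
    have k2: "log 2 (1 / (1 - norm z)) < real k + 1" unfolding k_def using lg0 by linarith
    have e1: "2 powr real k \<le> 1 / (1 - norm z)"
      using k1 nz by (simp add: le_log_iff)
    have e2: "1 / (1 - norm z) < 2 powr (real k + 1)"
      using k2 nz by (simp add: log_less_iff)
    have h1: "1 - norm z \<le> (1/2)^k"
      using e1 nz by (simp add: powr_realpow divide_simps power_one_over) (metis mult.commute)
    have h2: "(1/2)^(k+1) < 1 - norm z"
    proof -
      have "2 powr (real k + 1) = 2^(k+1)" by (simp add: powr_add powr_realpow)
      with e2 nz show ?thesis by (simp add: divide_simps power_one_over) (metis mult.commute)
    qed
    have zA: "z \<in> A k" unfolding A_def using h1 h2 by auto
    have base: "(1/2::real)^(k+1) \<le> 1 - (norm z)\<^sup>2"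
      using h2 nz norm_ge_zero[of z] by (smt (verit, best) power2_eq_square mult_left_le_one_le)
    have b0: "(0::real) < (1/2)^(k+1)" by simp
    have dens: "(1 - (norm z)\<^sup>2) powr (a - 1) \<le> 2 powr ((k+1) * \<gamma>)"
    proof (cases "a \<ge> 1")
      case True
      have "1 - (norm z)\<^sup>2 \<le> 1" by simp
      hence "(1 - (norm z)\<^sup>2) powr (a - 1) \<le> 1 powr (a - 1)"
        using True base b0 nz by (intro powr_mono2) (auto intro!: power_le_one)
      also have "\<dots> \<le> 2 powr ((k+1) * \<gamma>)" using g0 by (simp add: ge_one_powr_ge_zero)
      finally show ?thesis .
    next
      case False
      have "(1 - (norm z)\<^sup>2) powr (a - 1) \<le> ((1/2)^(k+1)) powr (a - 1)"
        using False base b0 by (intro powr_mono2') auto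
      also have "\<dots> = 2 powr ((k+1) * \<gamma>)"
      proof -
        have "(1/2::real)^(k+1) = 2 powr (- real (k+1))"
        proof -
          have "2 powr (- real (k+1)) = inverse (2 powr real (k+1))" by (rule powr_minus)
          also have "2 powr real (k+1) = (2::real)^(k+1)" by (rule powr_realpow) simp
          finally show ?thesis by (simp add: power_one_over inverse_eq_divide)
        qed
        hence "((1/2::real)^(k+1)) powr (a - 1) = 2 powr (- real (k+1) * (a - 1))"
          by (simp add: powr_powr)
        also have "- real (k+1) * (a - 1) = (k+1) * \<gamma>" using False by (simp add: \<gamma>_def algebra_simps)
        finally show ?thesis .
      qed
      finally show ?thesis .
    qed
    have "D z = ennreal ((1 - (norm z)\<^sup>2) powr (a - 1))" using True by (simp add: D_def)
    also have "\<dots> \<le> ennreal (2 powr ((k+1) * \<gamma>)) * indicator (A k) z"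
      using zA dens by simp
    also have "\<dots> \<le> (\<Sum>k. ennreal (2 powr ((k+1) * \<gamma>)) * indicator (A k) z)"
      by (rule ennreal_le_suminf)
    finally show ?thesis .
  qed
  have Ak: "emeasure lebesgue (A k) \<le> ennreal (V * d * (1/2)^k)" for k
  proof -
    define r1 :: real where "r1 = 1 - (1/2)^(k+1)"
    define r0 :: real where "r0 = 1 - (1/2)^k"
    have pk: "(1/2::real)^k \<le> 1" "(1/2::real)^(k+1) \<le> 1" "0 \<le> (1/2::real)^k" "0 \<le> (1/2::real)^(k+1)"
      by (intro power_le_one; simp)+ simp_all
    have r0: "0 \<le> r0" "r0 \<le> 1" unfolding r0_def using pk by linarith+
    have r1: "0 \<le> r1" "r1 \<le> 1" unfolding r1_def using pk by linarith+
    have sub: "ball (0::complex^'n) r0 \<subseteq> ball 0 r1"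
      unfolding r0_def r1_def by (intro subset_ball) (simp add: power_one_over divide_simps)
    have Aeq: "A k = ball 0 r1 - ball 0 r0" unfolding A_def r0_def r1_def by simp
    have "emeasure lebesgue (A k) = emeasure lebesgue (ball (0::complex^'n) r1) - emeasure lebesgue (ball (0::complex^'n) r0)"
      unfolding Aeq by (rule emeasure_Diff) (use sub emeasure_bounded_finite[of "ball (0::complex^'n) r0"] in auto)
    also have "\<dots> = ennreal (r1 ^ d * V) - ennreal (r0 ^ d * V)"
      using r0 r1 by (simp only: bvol)
    also have "\<dots> = ennreal (r1 ^ d * V - r0 ^ d * V)"
      using r0 V0 by (simp add: ennreal_minus)
    also have "\<dots> \<le> ennreal (V * d * (1/2)^k)"
    proof (rule ennreal_leI)
      have "r1 ^ d \<le> 1" using r1 by (simp add: power_le_one)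
      moreover have "1 - real d * (1 - r0) \<le> r0 ^ d" using Bern_aux r0 by blast
      ultimately have "r1 ^ d - r0 ^ d \<le> real d * (1/2)^k" unfolding r0_def by simp
      hence "(r1 ^ d - r0 ^ d) * V \<le> (real d * (1/2)^k) * V" using V0 by (rule mult_right_mono)
      thus "r1 ^ d * V - r0 ^ d * V \<le> V * d * (1/2)^k" by (simp add: algebra_simps)
    qed
    finally show ?thesis .
  qed
  have "emeasure (mu_alpha a) (UNIV :: (complex^'n) set) = (\<integral>\<^sup>+ z. D z \<partial>lebesgue)"
    by (subst emeasure_mu_alpha) (auto simp: D_def)
  also have "\<dots> \<le> (\<integral>\<^sup>+ z. (\<Sum>k. ennreal (2 powr ((k+1) * \<gamma>)) * indicator (A k) z) \<partial>lebesgue)"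
    by (intro nn_integral_mono pt)
  also have "\<dots> = (\<Sum>k. \<integral>\<^sup>+ z. ennreal (2 powr ((k+1) * \<gamma>)) * indicator (A k) z \<partial>lebesgue)"
    by (intro nn_integral_suminf) auto
  also have "\<dots> = (\<Sum>k. ennreal (2 powr ((k+1) * \<gamma>)) * emeasure lebesgue (A k))"
    by (simp add: nn_integral_cmult_indicator)
  also have "\<dots> \<le> (\<Sum>k. ennreal (2 powr ((k+1) * \<gamma>) * (V * d * (1/2)^k)))"
  proof (intro suminf_le summableI)
    fix k
    have "ennreal (2 powr (real (k+1) * \<gamma>)) * emeasure lebesgue (A k) \<le>
          ennreal (2 powr (real (k+1) * \<gamma>)) * ennreal (V * d * (1/2)^k)"
      by (rule mult_left_mono[OF Ak]) simp
    also have "\<dots> = ennreal (2 powr (real (k+1) * \<gamma>) * (V * d * (1/2)^k))"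
      using V0 by (simp add: ennreal_mult add.commute)
    finally show "ennreal (2 powr (real (k+1) * \<gamma>)) * emeasure lebesgue (A k) \<le>
          ennreal (2 powr (real (k+1) * \<gamma>) * (V * d * (1/2)^k))" .
  qed
  also have "\<dots> = (\<Sum>k. ennreal ((2 powr \<gamma> * V * d) * (2 powr (\<gamma> - 1)) ^ k))"
  proof -
    have eqk: "2 powr ((k+1) * \<gamma>) * (V * d * (1/2)^k) = (2 powr \<gamma> * V * d) * (2 powr (\<gamma> - 1)) ^ k" for k :: nat
    proof -
      have "2 powr ((k+1) * \<gamma>) = 2 powr \<gamma> * (2 powr \<gamma>) ^ k"
      proof -
        have "(2 powr \<gamma>)^k = (2 powr \<gamma>) powr (real k)" by (simp add: powr_realpow)
        also have "\<dots> = 2 powr (\<gamma> * k)" by (simp add: powr_powr)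
        finally have "(2 powr \<gamma>)^k = 2 powr (\<gamma> * k)" .
        thus ?thesis by (simp add: powr_add[symmetric] algebra_simps)
      qed
      moreover have "(2 powr (\<gamma> - 1)) ^ k = (2 powr \<gamma>) ^ k * (1/2)^k"
        by (simp add: powr_diff power_divide power_one_over divide_simps)
      ultimately show ?thesis by (simp add: algebra_simps)
    qed
    show ?thesis by (intro suminf_cong arg_cong[where f=ennreal] eqk)
  qed
  also have "\<dots> < \<infinity>"
  proof -
    have c: "norm (2 powr (\<gamma> - 1)) < (1::real)" using g1 by (simp add: powr_less_one)
    have "summable (\<lambda>k. (2 powr \<gamma> * V * d) * (2 powr (\<gamma> - 1)) ^ k)"
      using c by (intro summable_mult summable_geometric)
    thus ?thesis using V0 by (subst suminf_ennreal2) auto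
  qed
  finally show ?thesis .
qed

lemma cinner_norm_le: "cmod (cinner x y) \<le> norm x * norm y"
proof -
  have "cmod (cinner x y) \<le> (\<Sum>i\<in>UNIV. cmod (x$i) * cmod (y$i))"
    unfolding cinner_def by (rule order_trans[OF norm_sum]) (simp add: norm_mult)
  also have "\<dots> \<le> L2_set (\<lambda>i. cmod (x$i)) UNIV * L2_set (\<lambda>i. cmod (y$i)) UNIV"
    using L2_set_mult_ineq[of "\<lambda>i. cmod (x$i)" "\<lambda>i. cmod (y$i)" UNIV] by simp
  also have "\<dots> = norm x * norm y" by (simp add: norm_vec_def)
  finally show ?thesis .
qed

lemma cinner_scale: "cinner (a *\<^sub>R x) (b *\<^sub>R y) = complex_of_real (a*b) * cinner x y"
  unfolding cinner_def vector_scaleR_component sum_distrib_left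
  by (intro sum.cong refl) (simp add: scaleR_conv_of_real)

lemma cinner_diff_right: "cinner x (y - w) = cinner x y - cinner x w"
  by (simp add: cinner_def algebra_simps sum_subtractf)

lemma normsq_vec: "(norm (x::complex^'n))^2 = (\<Sum>i\<in>UNIV. (cmod (x$i))^2)"
  by (simp add: norm_vec_def L2_set_def sum_nonneg)

lemma cinner_self: "cinner x x = complex_of_real ((norm x)^2)"
  unfolding normsq_vec cinner_def of_real_sum
  by (intro sum.cong refl) (metis complex_norm_square)

lemma cmod_diff_sq: "(cmod (a - b))^2 = (cmod a)^2 + (cmod b)^2 - 2 * Re (a * cnj b)"
  unfolding cmod_power2 by (simp add: power2_diff algebra_simps)

lemma norm_diff_sq: "(norm (x - y))^2 = (norm x)^2 + (norm y)^2 - 2 * Re (cinner x y)"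
  unfolding normsq_vec cinner_def Re_sum
  by (simp add: cmod_diff_sq sum.distrib sum_subtractf sum_distrib_left)

lemma pdist_pos:
  assumes "z \<noteq> u" shows "pdist z u > 0"
proof (cases "z \<noteq> 0 \<and> u \<noteq> 0")
  case False
  then show ?thesis using assms by (auto simp: pdist_def)
next
  case True
  have ge: "pdist z u \<ge> 0" using True by (simp add: pdist_def)
  show ?thesis
  proof (rule ccontr)
    assume "\<not> ?thesis"
    with ge have eq0: "pdist z u = 0" by simp
    have s: "\<bar>norm z - norm u\<bar> + cmod (1 - cinner z u / complex_of_real (norm z * norm u)) = 0"
      using eq0 True by (simp add: pdist_def del: of_real_mult)
    have c: "cmod (1 - cinner z u / complex_of_real (norm z * norm u)) = 0"
      using s by (smt (verit) abs_ge_zero norm_ge_zero)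
    have n: "norm z = norm u" using s by (smt (verit) norm_ge_zero)
    have nz: "norm z > 0" using True by simp
    from c have "cinner z u / complex_of_real (norm z * norm u) = 1" by simp
    hence "cinner z u = complex_of_real (norm z * norm u)" by (simp only: divide_eq_1_iff)
    hence "Re (cinner z u) = (norm z)^2" using n by (simp add: power2_eq_square)
    hence "(norm (z - u))^2 = 0" using n by (simp add: norm_diff_sq)
    thus False using assms by simp
  qed
qed

lemma cinner_unit_bound:
  assumes "z \<noteq> 0" "u \<noteq> 0"
  shows "cmod (1 - cinner z u / complex_of_real (norm z * norm u))
          \<le> norm ((1 / norm z) *\<^sub>R z - (1 / norm u) *\<^sub>R u)"
proof -
  define zh where "zh = (1 / norm z) *\<^sub>R z"
  define uh where "uh = (1 / norm u) *\<^sub>R u"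
  have nzh: "norm zh = 1" using assms by (simp add: zh_def)
  have "cinner zh uh = complex_of_real (1 / norm z * (1 / norm u)) * cinner z u"
    unfolding zh_def uh_def by (rule cinner_scale)
  hence c1: "cinner zh uh = cinner z u / complex_of_real (norm z * norm u)"
    by (simp add: field_simps)
  have c2: "cinner zh zh = 1" using nzh by (simp add: cinner_self)
  have "1 - cinner z u / complex_of_real (norm z * norm u) = cinner zh (zh - uh)"
    by (simp add: cinner_diff_right c1 c2)
  hence "cmod (1 - cinner z u / complex_of_real (norm z * norm u)) \<le> norm zh * norm (zh - uh)"
    using cinner_norm_le by metis
  thus ?thesis using nzh by (simp add: zh_def uh_def)
qed

lemma unit_diff_bound:
  fixes x y :: "'a::real_normed_vector"
  assumes "x \<noteq> 0" "y \<noteq> 0"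
  shows "norm ((1 / norm x) *\<^sub>R x - (1 / norm y) *\<^sub>R y) \<le> 2 * norm (x - y) / norm x"
proof -
  have nx: "norm x > 0" "norm y > 0" using assms by auto
  have eq: "(1 / norm x) *\<^sub>R x - (1 / norm y) *\<^sub>R y
        = (1 / norm x) *\<^sub>R (x - y) + ((1 / norm x) - (1 / norm y)) *\<^sub>R y"
    by (simp add: algebra_simps)
  have "norm (((1 / norm x) - (1 / norm y)) *\<^sub>R y) = \<bar>norm y - norm x\<bar> / norm x"
    using nx by (simp add: field_simps abs_div abs_mult)
  also have "\<dots> \<le> norm (x - y) / norm x"
    using nx norm_triangle_ineq3[of y x] by (intro divide_right_mono) (auto simp: norm_minus_commute)
  finally have h: "norm (((1 / norm x) - (1 / norm y)) *\<^sub>R y) \<le> norm (x - y) / norm x" .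
  have "norm ((1 / norm x) *\<^sub>R x - (1 / norm y) *\<^sub>R y)
     \<le> norm ((1 / norm x) *\<^sub>R (x - y)) + norm (((1 / norm x) - (1 / norm y)) *\<^sub>R y)"
    unfolding eq by (rule norm_triangle_ineq)
  also have "\<dots> \<le> norm (x - y) / norm x + norm (x - y) / norm x"
    using h nx by simp
  finally show ?thesis by simp
qed

lemma pdist_meas: "pdist z \<in> borel_measurable borel"
proof -
  have [measurable]: "(\<lambda>x::complex^'n. cnj (x $ i)) \<in> borel_measurable borel" for i
    by (intro borel_measurable_continuous_onI continuous_intros)
  have [measurable]: "(\<lambda>x::complex^'n. complex_of_real (norm z * norm x)) \<in> borel_measurable borel"
    by (intro borel_measurable_continuous_onI continuous_intros)
  have [measurable]: "(\<lambda>x::complex^'n. norm z + norm x) \<in> borel_measurable borel"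
    by (intro borel_measurable_continuous_onI continuous_intros)
  have [measurable]: "{u::complex^'n \<in> space borel. z \<noteq> 0 \<and> u \<noteq> 0} \<in> sets borel"
  proof -
    have "{u::complex^'n \<in> space borel. z \<noteq> 0 \<and> u \<noteq> 0} = (if z = 0 then {} else - {0})" by auto
    thus ?thesis by (simp add: borel_open open_Compl)
  qed
  show ?thesis unfolding pdist_def[abs_def] cinner_def by measurable
qed

lemma pball_sets: "pball z r \<in> sets lebesgue"
proof -
  have "pball z r = ball 0 1 \<inter> pdist z -` {..<r}" by (auto simp: pball_def)
  also have "\<dots> \<in> sets borel"
  proof (rule sets.Int)
    show "ball 0 1 \<in> sets borel" by (simp add: borel_open)
    have "pdist z -` {..<r} \<inter> space borel \<in> sets borel"
      using pdist_meas[of z] by (rule measurable_sets) simp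
    thus "pdist z -` {..<r} \<in> sets borel" by simp
  qed
  finally have "pball z r \<in> sets lborel" by simp
  thus ?thesis by (rule sets_completionI_sets)
qed

lemma pball_contains_ball:
  fixes z :: "complex^'n"
  assumes z1: "norm z < 1" and rz: "r > 1 - norm z"
  shows "\<exists>w0. ball w0 (min r 1 / 16) \<subseteq> pball z r \<and> (\<forall>u\<in>ball w0 (min r 1 / 16). norm u \<le> 1 - min r 1 / 16)"
proof -
  define \<delta> where "\<delta> = min r 1 / 16"
  have r0: "r > 0" using z1 rz by simp
  have d0: "0 < \<delta>" "\<delta> \<le> 1/16" "16 * \<delta> \<le> r" "16 * \<delta> \<le> 1" using r0 by (auto simp: \<delta>_def)
  show ?thesis
  proof (cases "z = 0")
    case True
    obtain e :: "complex^'n" where e: "e \<in> Basis" using nonempty_Basis by blast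
    have ne: "norm e = 1" using e by simp
    define w0 where "w0 = (1/2) *\<^sub>R e"
    have nw: "norm w0 = 1/2" using ne by (simp add: w0_def)
    have bnd: "norm u \<le> 1 - \<delta>" if "u \<in> ball w0 \<delta>" for u
    proof -
      have "norm u \<le> norm w0 + norm (u - w0)" by (metis add.commute diff_add_cancel norm_triangle_ineq)
      also have "norm (u - w0) < \<delta>" using that by (simp add: dist_norm norm_minus_commute)
      finally show ?thesis using nw d0 by simp
    qed
    have "ball w0 \<delta> \<subseteq> pball z r"
    proof
      fix u assume u: "u \<in> ball w0 \<delta>"
      have nu: "norm u < 1" using bnd[OF u] d0 by simp
      have "pdist z u = norm u" using True by (simp add: pdist_def)
      also have "\<dots> < r" using nu rz True by simp
      finally show "u \<in> pball z r" using nu by (simp add: pball_def)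
    qed
    thus ?thesis using bnd unfolding \<delta>_def by blast
  next
    case False
    define zh where "zh = (1 / norm z) *\<^sub>R z"
    define t0 where "t0 = (if norm z \<ge> 1/2 then min (norm z) (1 - 2*\<delta>) else 1/2)"
    have t0: "1/2 \<le> t0" "t0 \<le> 1 - 2*\<delta>" using d0 by (auto simp: t0_def min_def)
    define w0 where "w0 = t0 *\<^sub>R zh"
    have nzh: "norm zh = 1" using False by (simp add: zh_def)
    have nw: "norm w0 = t0" using t0 nzh by (simp add: w0_def)
    have w0nz: "w0 \<noteq> 0" using nw t0 by auto
    have wh: "(1 / norm w0) *\<^sub>R w0 = zh" using nw t0 by (simp add: w0_def)
    have bnd: "t0 - \<delta> \<le> norm u \<and> norm u \<le> t0 + \<delta>" if "u \<in> ball w0 \<delta>" for u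
    proof -
      have du: "norm (w0 - u) < \<delta>" using that by (simp add: dist_norm)
      have "norm u \<le> norm w0 + norm (w0 - u)" by (metis norm_triangle_sub add.commute norm_minus_commute)
      moreover have "norm w0 \<le> norm u + norm (w0 - u)" by (rule norm_triangle_sub)
      ultimately show ?thesis using du nw by linarith
    qed
    have "ball w0 \<delta> \<subseteq> pball z r"
    proof
      fix u assume u: "u \<in> ball w0 \<delta>"
      have du: "norm (w0 - u) < \<delta>" using u by (simp add: dist_norm)
      have nu: "t0 - \<delta> \<le> norm u" "norm u \<le> t0 + \<delta>" using bnd[OF u] by auto
      have unz: "u \<noteq> 0" using nu t0 d0 by auto
      have nu1: "norm u < 1" using nu t0 d0 by linarith
      have "cmod (1 - cinner z u / complex_of_real (norm z * norm u))
            \<le> norm ((1 / norm z) *\<^sub>R z - (1 / norm u) *\<^sub>R u)"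
        using False unz by (rule cinner_unit_bound)
      also have "\<dots> = norm ((1 / norm w0) *\<^sub>R w0 - (1 / norm u) *\<^sub>R u)"
        using wh by (simp add: zh_def)
      also have "\<dots> \<le> 2 * norm (w0 - u) / norm w0" using w0nz unz by (rule unit_diff_bound)
      also have "\<dots> \<le> 4 * \<delta>"
      proof -
        have "2 * norm (w0 - u) / norm w0 \<le> 2 * \<delta> / (1/2)"
          using du nw t0 d0 by (intro frac_le) auto
        thus ?thesis by simp
      qed
      finally have ang: "cmod (1 - cinner z u / complex_of_real (norm z * norm u)) \<le> 4 * \<delta>" .
      have rad: "\<bar>norm z - norm u\<bar> \<le> \<bar>norm z - t0\<bar> + \<delta>" using nu by linarith
      have pd: "pdist z u \<le> \<bar>norm z - t0\<bar> + 5 * \<delta>"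
        using False unz ang rad by (simp add: pdist_def del: of_real_mult)
      have "\<bar>norm z - t0\<bar> + 5 * \<delta> < r"
      proof (cases "norm z \<ge> 1/2")
        case True
        hence "\<bar>norm z - t0\<bar> \<le> 2 * \<delta>" using z1 d0 by (auto simp: t0_def)
        thus ?thesis using d0 by linarith
      next
        case nT: False
        hence "\<bar>norm z - t0\<bar> = 1/2 - norm z" by (auto simp: t0_def)
        thus ?thesis using d0 rz by linarith
      qed
      with pd have "pdist z u < r" by linarith
      thus "u \<in> pball z r" using nu1 by (simp add: pball_def)
    qed
    moreover have "\<forall>u\<in>ball w0 \<delta>. norm u \<le> 1 - \<delta>" using bnd t0 by fastforce
    ultimately show ?thesis unfolding \<delta>_def by blast
  qed
qed

lemma powr_lb_aux:
  fixes x \<delta> a :: real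
  assumes "0 < \<delta>" "\<delta> \<le> x" "x \<le> 1"
  shows "\<delta> powr (max 0 (a - 1)) \<le> x powr (a - 1)"
proof (cases "a \<ge> 1")
  case True
  thus ?thesis using assms by (simp add: max_def powr_mono2)
next
  case False
  have "1 powr (a - 1) \<le> x powr (a - 1)" using False assms by (intro powr_mono2') auto
  thus ?thesis using False by (simp add: max_def)
qed

lemma unit_ball_pos: "0 < measure lborel (ball (0::'a::euclidean_space) 1)"
  using content_ball_pos[of 1 "0::'a"] by simp

lemma pball_measure_lb:
  fixes z :: "complex^'n"
  assumes "norm z < 1" "r > 1 - norm z"
  shows "ennreal (measure lborel (ball (0::complex^'n) 1) * (min r 1 / 16) ^ DIM(complex^'n)
           * (min r 1 / 16) powr (max 0 (a - 1))) \<le> emeasure (mu_alpha a) (pball z r)"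
proof -
  define \<delta> where "\<delta> = min r 1 / 16"
  define V where "V = measure lborel (ball (0::complex^'n) 1)"
  have r0: "r > 0" using assms by simp
  have d0: "0 < \<delta>" "\<delta> \<le> 1" using r0 by (auto simp: \<delta>_def)
  obtain w0 :: "complex^'n" where w0: "ball w0 \<delta> \<subseteq> pball z r" "\<forall>u\<in>ball w0 \<delta>. norm u \<le> 1 - \<delta>"
    using pball_contains_ball[OF assms] unfolding \<delta>_def by blast
  have V0: "V \<ge> 0" by (simp add: V_def)
  have Vb: "emeasure lebesgue (ball (0::complex^'n) 1) = ennreal V"
    unfolding V_def using emeasure_bounded_finite[of "ball (0::complex^'n) 1"]
    by (simp add: emeasure_eq_ennreal_measure)
  have pt: "ennreal (\<delta> powr (max 0 (a - 1))) * indicator (ball w0 \<delta>) u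
        \<le> indicator (ball 0 1) u * ennreal ((1 - (norm u)\<^sup>2) powr (a - 1)) * indicator (ball w0 \<delta>) u" for u
  proof (cases "u \<in> ball w0 \<delta>")
    case True
    have nu: "norm u \<le> 1 - \<delta>" using w0(2) True by blast
    have nu1: "norm u < 1" using nu d0 by simp
    have "(norm u)\<^sup>2 \<le> norm u" using nu1 by (simp add: power2_eq_square mult_left_le_one_le)
    hence x1: "\<delta> \<le> 1 - (norm u)\<^sup>2" using nu by simp
    have x2: "1 - (norm u)\<^sup>2 \<le> 1" by simp
    show ?thesis using True nu1 powr_lb_aux[OF d0(1) x1 x2, of a] by simp
  qed simp
  have "ennreal (V * \<delta> ^ DIM(complex^'n) * \<delta> powr (max 0 (a - 1)))
      = ennreal (\<delta> powr (max 0 (a - 1))) * emeasure lebesgue (ball w0 \<delta>)"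
    using d0 V0 by (simp add: emeasure_lebesgue_ball_conv_unit_ball[of \<delta> w0] Vb ennreal_mult[symmetric]
          mult_ac del: emeasure_completion)
  also have "\<dots> = (\<integral>\<^sup>+ u. ennreal (\<delta> powr (max 0 (a - 1))) * indicator (ball w0 \<delta>) u \<partial>lebesgue)"
    by (simp add: nn_integral_cmult_indicator del: emeasure_completion)
  also have "\<dots> \<le> (\<integral>\<^sup>+ u. indicator (ball 0 1) u * ennreal ((1 - (norm u)\<^sup>2) powr (a - 1)) * indicator (ball w0 \<delta>) u \<partial>lebesgue)"
    by (intro nn_integral_mono pt)
  also have "\<dots> = emeasure (mu_alpha a) (ball w0 \<delta>)"
    by (subst emeasure_mu_alpha) auto
  also have "\<dots> \<le> emeasure (mu_alpha a) (pball z r)"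
    using w0(1) pball_sets[of z r] by (intro emeasure_mono) auto
  finally show ?thesis unfolding \<delta>_def V_def .
qed

lemma young_aux:
  fixes G t s rr :: real
  assumes "0 \<le> G" "0 < t" "0 < s" "s \<le> rr"
  shows "G powr s \<le> t powr s + t powr (s - rr) * G powr rr"
proof (cases "G \<le> t")
  case True
  have "G powr s \<le> t powr s" using True assms by (intro powr_mono2) auto
  moreover have "0 \<le> t powr (s - rr) * G powr rr" by simp
  ultimately show ?thesis by linarith
next
  case False
  hence G1: "1 \<le> G / t" using assms by simp
  have Gp: "G > 0" using False assms by simp
  have "G powr s = t powr s * (G / t) powr s" using assms Gp by (simp add: powr_divide)
  also have "\<dots> \<le> t powr s * (G / t) powr rr"
    using G1 assms by (intro mult_left_mono powr_mono) auto
  also have "\<dots> = t powr (s - rr) * G powr rr"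
    using assms Gp by (simp add: powr_divide powr_diff)
  finally show ?thesis using powr_ge_zero[of t s] by linarith
qed

lemma epowr_ennreal: "0 \<le> x \<Longrightarrow> epowr (ennreal x) a = ennreal (x powr a)"
  by (simp add: epowr_def)

lemma epowr_top[simp]: "epowr top a = top"
  by (simp add: epowr_def)

lemma epowr_meas[measurable]:
  assumes [measurable]: "f \<in> borel_measurable M" "g \<in> borel_measurable M"
  shows "(\<lambda>z. epowr (f z) (g z)) \<in> borel_measurable M"
  unfolding epowr_def by measurable

lemma winv_meas[measurable]:
  assumes [measurable]: "w \<in> borel_measurable M"
  shows "winv w \<in> borel_measurable M"
  unfolding winv_def[abs_def] by measurable

lemma ball_main:
  fixes M :: "(complex^'n) measure" and B :: "(complex^'n) set" and p w :: "complex^'n \<Rightarrow> real"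
  assumes B[measurable]: "B \<in> sets M" and mB: "emeasure M B = ennreal m" and m0: "m > 0"
    and pm[measurable]: "p \<in> borel_measurable M" and wm[measurable]: "w \<in> borel_measurable M"
    and wpos: "\<And>z. 0 \<le> w z"
    and q: "q > 1"
    and pAE: "AE z in M. z \<in> B \<longrightarrow> 1 < p z \<and> p z \<le> q"
    and C0: "C0 > 0"
    and H: "AE z in M. z \<in> B \<longrightarrow> m powr ((pB - 1) / (p z - 1)) \<le> C0 * m"
  shows "((\<integral>\<^sup>+ z\<in>B. ennreal (w z) \<partial>M) / emeasure M B) *
      epowr ((\<integral>\<^sup>+ z\<in>B. epowr (winv w z) (1 / (q - 1)) \<partial>M) / emeasure M B) (q - 1)
    \<le> ennreal ((1 + C0) powr (q - 1)) *
      (ennreal (m powr (- pB)) * (\<integral>\<^sup>+ z\<in>B. ennreal (w z) \<partial>M) *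
       vnorm M (\<lambda>z. conj_exp p z / p z) (\<lambda>z. indicator B z * winv w z))"
proof -
  define s where "s = 1 / (q - 1)"
  have s0: "s > 0" using q by (simp add: s_def)
  have sq: "s * (q - 1) = 1" using q by (simp add: s_def)
  define W where "W = (\<integral>\<^sup>+ z\<in>B. ennreal (w z) \<partial>M)"
  define S where "S = (\<integral>\<^sup>+ z\<in>B. epowr (winv w z) s \<partial>M)"
  define T0 where "T0 = m powr ((1 - pB) * s)"
  have T0p: "T0 > 0" using m0 by (simp add: T0_def)
  define D where "D = (1 + C0) * m * T0"
  have Dp: "D > 0" using C0 m0 T0p by (simp add: D_def)
  define Mod where "Mod l = (\<integral>\<^sup>+ z. epowr (indicator B z * winv w z / ennreal l) (conj_exp p z / p z) \<partial>M)" for l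
  have vn: "vnorm M (\<lambda>z. conj_exp p z / p z) (\<lambda>z. indicator B z * winv w z)
      = Inf {ennreal l |l. l > 0 \<and> Mod l \<le> 1}"
    by (simp add: vnorm_def Mod_def)
  have K: "S \<le> ennreal (D * l powr s)" if l0: "l > 0" and Ml: "Mod l \<le> 1" for l
  proof -
    have pt: "AE z in M. epowr (winv w z) s * indicator B z
        \<le> ennreal (l powr s * T0) * indicator B z
          + ennreal (l powr s * T0 * C0 * m) * epowr (indicator B z * winv w z / ennreal l) (conj_exp p z / p z)"
      using pAE H
    proof eventually_elim
      case (elim z)
      show ?case
      proof (cases "z \<in> B")
        case False then show ?thesis by simp
      next
        case True
        have pz: "1 < p z" "p z \<le> q" and Hz: "m powr ((pB - 1) / (p z - 1)) \<le> C0 * m"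
          using elim True by auto
        define rr where "rr = 1 / (p z - 1)"
        have rr_eq: "conj_exp p z / p z = rr" using pz by (simp add: conj_exp_def rr_def)
        have srr: "s \<le> rr" unfolding s_def rr_def using pz by (intro divide_left_mono) auto
        have cpos: "0 < l powr s * T0 * C0 * m" using l0 T0p C0 m0 by simp
        show ?thesis
        proof (cases "w z = 0")
          case True
          have "indicator B z * winv w z / ennreal l = top"
            using \<open>z \<in> B\<close> True by (simp add: winv_def ennreal_top_divide)
          hence "ennreal (l powr s * T0 * C0 * m) * epowr (indicator B z * winv w z / ennreal l) (conj_exp p z / p z) = top"
            using cpos l0 T0p C0 m0 by (simp add: ennreal_mult_top)
          thus ?thesis by simp
        next
          case False
          hence wz: "w z > 0" using wpos[of z] by simp
          define xr where "xr = 1 / w z"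
          have xr0: "xr > 0" using wz by (simp add: xr_def)
          have wi: "winv w z = ennreal xr" using False by (simp add: winv_def xr_def)
          define t where "t = m powr (1 - pB)"
          have t0: "t > 0" using m0 by (simp add: t_def)
          have y: "(xr / l) powr s \<le> t powr s + t powr (s - rr) * (xr / l) powr rr"
            using xr0 l0 t0 s0 srr by (intro young_aux) auto
          have ts: "t powr s = T0" by (simp add: t_def T0_def powr_powr)
          have tsr: "t powr (s - rr) = T0 * m powr ((pB - 1) / (p z - 1))"
          proof -
            have "t powr (s - rr) = m powr ((1 - pB) * (s - rr))" by (simp add: t_def powr_powr)
            also have "(1 - pB) * (s - rr) = (1 - pB) * s + (pB - 1) / (p z - 1)"
              using pz by (simp add: rr_def field_simps)
            finally show ?thesis by (simp add: powr_add T0_def)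
          qed
          have "xr powr s = l powr s * (xr / l) powr s"
            using xr0 l0 by (simp add: powr_divide)
          also have "\<dots> \<le> l powr s * (T0 + T0 * (C0 * m) * (xr / l) powr rr)"
          proof (intro mult_left_mono)
            have "t powr (s - rr) * (xr / l) powr rr \<le> T0 * (C0 * m) * (xr / l) powr rr"
              unfolding tsr using Hz T0p by (intro mult_right_mono) auto
            thus "(xr / l) powr s \<le> T0 + T0 * (C0 * m) * (xr / l) powr rr" using y ts by linarith
          qed simp
          also have "\<dots> = l powr s * T0 + l powr s * T0 * C0 * m * (xr / l) powr rr"
            by (simp add: algebra_simps)
          finally have real: "xr powr s \<le> l powr s * T0 + l powr s * T0 * C0 * m * (xr / l) powr rr" .
          have "epowr (winv w z) s * indicator B z = ennreal (xr powr s)"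
            using \<open>z \<in> B\<close> xr0 by (simp add: wi epowr_ennreal)
          also have "\<dots> \<le> ennreal (l powr s * T0 + l powr s * T0 * C0 * m * (xr / l) powr rr)"
            using real by (rule ennreal_leI)
          also have "\<dots> = ennreal (l powr s * T0) * indicator B z
              + ennreal (l powr s * T0 * C0 * m) * epowr (indicator B z * winv w z / ennreal l) (conj_exp p z / p z)"
            using \<open>z \<in> B\<close> xr0 l0 T0p C0 m0
            by (simp add: wi rr_eq divide_ennreal epowr_ennreal ennreal_mult[symmetric] ennreal_plus[symmetric]
                  del: ennreal_plus)
          finally show ?thesis .
        qed
      qed
    qed
    have "S = (\<integral>\<^sup>+ z. epowr (winv w z) s * indicator B z \<partial>M)" by (simp add: S_def)
    also have "\<dots> \<le> (\<integral>\<^sup>+ z. ennreal (l powr s * T0) * indicator B z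
          + ennreal (l powr s * T0 * C0 * m) * epowr (indicator B z * winv w z / ennreal l) (conj_exp p z / p z) \<partial>M)"
      by (rule nn_integral_mono_AE[OF pt])
    also have "\<dots> = ennreal (l powr s * T0) * emeasure M B + ennreal (l powr s * T0 * C0 * m) * Mod l"
      unfolding Mod_def conj_exp_def
      by (subst nn_integral_add) (auto simp: nn_integral_cmult nn_integral_cmult_indicator)
    also have "\<dots> \<le> ennreal (l powr s * T0) * ennreal m + ennreal (l powr s * T0 * C0 * m) * 1"
      using Ml mB by (intro add_mono mult_left_mono) auto
    also have "\<dots> = ennreal (D * l powr s)"
      using l0 T0p C0 m0 by (simp add: D_def ennreal_mult[symmetric] ennreal_plus[symmetric] algebra_simps del: ennreal_plus)
    finally show ?thesis .
  qed
  show ?thesis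
  proof (cases "W = 0")
    case True
    thus ?thesis by (simp add: W_def[symmetric])
  next
    case Wnz: False
    show ?thesis
    proof (cases "\<exists>l. l > 0 \<and> Mod l \<le> 1")
      case False
      hence emp: "{ennreal l |l. l > 0 \<and> Mod l \<le> 1} = {}" by blast
      have "vnorm M (\<lambda>z. conj_exp p z / p z) (\<lambda>z. indicator B z * winv w z) = top"
        by (simp only: vn emp Inf_empty)
      moreover have "ennreal (m powr (- pB)) * W \<noteq> 0" using m0 Wnz by simp
      moreover have "ennreal ((1 + C0) powr (q - 1)) \<noteq> 0" using C0 by simp
      ultimately show ?thesis by (simp add: W_def[symmetric] ennreal_mult_top)
    next
      case True
      then obtain l0 where l0: "l0 > 0" "Mod l0 \<le> 1" by blast
      have "S \<le> ennreal (D * l0 powr s)" using K l0 by blast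
      hence Sfin: "S \<noteq> top" by (metis ennreal_neq_top neq_top_trans)
      define Sr where "Sr = enn2real S"
      have SSr: "S = ennreal Sr" using Sfin by (simp add: Sr_def ennreal_enn2real_if)
      have Sr0: "Sr \<ge> 0" by (simp add: Sr_def)
      have vlow: "ennreal ((Sr / D) powr (q - 1)) \<le> vnorm M (\<lambda>z. conj_exp p z / p z) (\<lambda>z. indicator B z * winv w z)"
        unfolding vn
      proof (rule Inf_greatest, clarify)
        fix l assume l: "l > 0" "Mod l \<le> 1"
        have "ennreal Sr \<le> ennreal (D * l powr s)" using K[OF l] SSr by simp
        hence "Sr \<le> D * l powr s" using Dp l by (simp add: ennreal_le_iff)
        hence "Sr / D \<le> l powr s" using Dp by (simp add: divide_simps mult.commute)
        hence "(Sr / D) powr (q - 1) \<le> (l powr s) powr (q - 1)"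
          using Sr0 Dp q by (intro powr_mono2) auto
        also have "\<dots> = l" using l sq by (simp add: powr_powr)
        finally show "ennreal ((Sr / D) powr (q - 1)) \<le> ennreal l" by (rule ennreal_leI)
      qed
      define a where "a = 1 / m * (Sr / m) powr (q - 1)"
      define b where "b = (1 + C0) powr (q - 1) * m powr (- pB) * (Sr / D) powr (q - 1)"
      have ab: "a \<le> b"
      proof (cases "Sr = 0")
        case True thus ?thesis by (simp add: a_def b_def)
      next
        case False
        hence Srp: "Sr > 0" using Sr0 by simp
        have DT: "D powr (q - 1) = (1 + C0) powr (q - 1) * m powr (q - 1) * m powr (1 - pB)"
        proof -
          have "D powr (q - 1) = (1 + C0) powr (q - 1) * m powr (q - 1) * T0 powr (q - 1)"
            using C0 m0 T0p by (simp add: D_def powr_mult)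
          moreover have "T0 powr (q - 1) = m powr (1 - pB)"
            using sq by (simp add: T0_def powr_powr mult.assoc)
          ultimately show ?thesis by simp
        qed
        have mm: "m powr (- pB) / m powr (1 - pB) = 1 / m"
        proof -
          have "m powr (- pB) / m powr (1 - pB) = m powr (- pB - (1 - pB))" by (rule powr_diff[symmetric])
          also have "\<dots> = m powr (- 1)" by simp
          also have "\<dots> = 1 / m" using m0 by (simp add: powr_minus divide_inverse)
          finally show ?thesis .
        qed
        have "b = Sr powr (q - 1) * (m powr (- pB) / m powr (1 - pB)) / m powr (q - 1)"
          using C0 m0 Srp Dp by (simp add: b_def powr_divide DT field_simps)
        also have "\<dots> = a"
          using m0 Srp by (simp add: mm a_def powr_divide field_simps)
        finally show ?thesis by simp
      qed
      have e1: "W / emeasure M B = W * ennreal (1 / m)"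
        using m0 by (simp add: mB divide_ennreal_def inverse_ennreal inverse_eq_divide)
      have e2: "epowr (S / emeasure M B) (q - 1) = ennreal ((Sr / m) powr (q - 1))"
        using m0 Sr0 by (simp add: mB SSr divide_ennreal epowr_ennreal)
      have "W / emeasure M B * epowr (S / emeasure M B) (q - 1) = W * ennreal a"
      proof -
        have "ennreal (1 / m) * ennreal ((Sr / m) powr (q - 1)) = ennreal a"
          unfolding a_def using m0 by (intro ennreal_mult[symmetric]) auto
        thus ?thesis by (simp only: e1 e2 mult.assoc)
      qed
      also have "\<dots> \<le> W * ennreal b" using ab by (intro mult_left_mono ennreal_leI) auto
      also have "\<dots> = ennreal ((1 + C0) powr (q - 1)) * (ennreal (m powr (- pB)) * W * ennreal ((Sr / D) powr (q - 1)))"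
        by (simp add: b_def ennreal_mult mult_ac)
      also have "\<dots> \<le> ennreal ((1 + C0) powr (q - 1)) * (ennreal (m powr (- pB)) * W *
          vnorm M (\<lambda>z. conj_exp p z / p z) (\<lambda>z. indicator B z * winv w z))"
        using vlow by (intro mult_left_mono) auto
      finally show ?thesis by (simp add: W_def S_def s_def)
    qed
  qed
qed

lemma exp_bound:
  fixes m Mt V \<rho> N L c P1 e E1 :: real
  assumes m0: "0 < m" and mM: "m \<le> Mt" and V0: "0 < V" and r0: "0 < \<rho>" and r1: "\<rho> \<le> 1"
    and mlb: "V * (\<rho>/16) powr N \<le> m" and N0: "0 \<le> N" and L1: "1 \<le> L" and lnr: "ln (1/\<rho>) \<le> L"
    and c0: "0 \<le> c" and P1: "1 < P1"
    and elo: "- (2 * (c / L) / (P1 - 1)) \<le> e" and ehi: "e \<le> E1" and E0: "0 \<le> E1"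
  shows "m powr e \<le> max (Mt powr E1) (exp (2 * c / (P1 - 1) * (\<bar>ln V\<bar> + N * ln 16 + N)))"
proof (cases "m \<ge> 1")
  case True
  have "m powr e \<le> m powr E1" using True ehi by (intro powr_mono) auto
  also have "\<dots> \<le> Mt powr E1" using m0 mM E0 by (intro powr_mono2) auto
  finally show ?thesis by simp
next
  case False
  define k where "k = 2 * (c / L) / (P1 - 1)"
  have k0: "0 \<le> k" using c0 L1 P1 by (simp add: k_def)
  have "m powr e \<le> m powr (- k)" using False m0 elo by (intro powr_mono') (auto simp: k_def)
  also have "\<dots> = exp (k * (- ln m))" using m0 by (simp add: powr_def)
  also have "\<dots> \<le> exp (2 * c / (P1 - 1) * (\<bar>ln V\<bar> + N * ln 16 + N))"
  proof (intro exp_le_cancel_iff[THEN iffD2])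
    have pos: "0 < V * (\<rho>/16) powr N" using V0 r0 by simp
    have "ln (V * (\<rho>/16) powr N) \<le> ln m" using pos mlb m0 by simp
    moreover have "ln (V * (\<rho>/16) powr N) = ln V + N * (ln \<rho> - ln 16)"
      using V0 r0 by (simp add: ln_mult ln_powr ln_div)
    moreover have "ln (1/\<rho>) = - ln \<rho>" using r0 by (simp add: ln_div)
    ultimately have X: "- ln m \<le> \<bar>ln V\<bar> + N * ln 16 + N * L"
      using lnr N0 mult_left_mono[OF lnr N0] by (smt (verit) mult_minus_right right_diff_distrib)
    have Y: "0 \<le> \<bar>ln V\<bar> + N * ln 16" using N0 by simp
    have "k * (- ln m) \<le> k * (\<bar>ln V\<bar> + N * ln 16 + N * L)" using X k0 by (rule mult_left_mono)
    also have "\<dots> = 2 * c / (P1 - 1) * ((\<bar>ln V\<bar> + N * ln 16) / L + N)"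
      using L1 by (simp add: k_def field_simps)
    also have "\<dots> \<le> 2 * c / (P1 - 1) * ((\<bar>ln V\<bar> + N * ln 16) + N)"
    proof (intro mult_left_mono add_right_mono)
      show "(\<bar>ln V\<bar> + N * ln 16) / L \<le> \<bar>ln V\<bar> + N * ln 16"
        using Y L1 by (simp add: divide_le_eq mult_le_cancel_left1 mult_left_mono[of 1 L])
      show "0 \<le> 2 * c / (P1 - 1)" using c0 P1 by simp
    qed
    finally show "k * (- ln m) \<le> 2 * c / (P1 - 1) * (\<bar>ln V\<bar> + N * ln 16 + N)" by simp
  qed
  finally show ?thesis by simp
qed

lemma pdist_nonneg: "pdist z u \<ge> 0"
  by (simp add: pdist_def)

lemma osc:
  assumes hold: "\<forall>z\<in>ball 0 1. \<forall>u\<in>ball 0 1. z \<noteq> u \<longrightarrow> \<bar>p z - p u\<bar> \<le> c / ln (exp 1 + 1 / pdist z u)"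
    and z0: "z0 \<in> ball 0 1" and u: "u \<in> pball z0 r"
  shows "\<bar>p u - p z0\<bar> \<le> max c 0 / ln (exp 1 + 1 / r)"
proof -
  have ub: "u \<in> ball 0 1" and pr: "pdist z0 u < r" using u by (auto simp: pball_def)
  have r0: "r > 0" using pr pdist_nonneg[of z0 u] by linarith
  have L2: "1 \<le> ln (exp 1 + 1 / r)"
  proof -
    have "exp 1 \<le> exp 1 + 1 / r" using r0 by simp
    hence "ln (exp 1) \<le> ln (exp 1 + 1 / r)" using r0 by (subst ln_le_cancel_iff) (auto intro: add_pos_nonneg)
    thus ?thesis by simp
  qed
  show ?thesis
  proof (cases "u = z0")
    case True thus ?thesis using L2 by simp
  next
    case False
    have pd: "pdist z0 u > 0" using False pdist_pos[of z0 u] by auto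
    have "1 / r \<le> 1 / pdist z0 u" using pd pr by (intro divide_left_mono) auto
    hence L1: "ln (exp 1 + 1 / r) \<le> ln (exp 1 + 1 / pdist z0 u)"
      using r0 pd by (subst ln_le_cancel_iff) (auto intro: add_pos_nonneg)
    have "\<bar>p u - p z0\<bar> = \<bar>p z0 - p u\<bar>" by simp
    also have "\<dots> \<le> c / ln (exp 1 + 1 / pdist z0 u)" using hold z0 ub False by auto
    also have "\<dots> \<le> max c 0 / ln (exp 1 + 1 / pdist z0 u)"
      using L1 L2 by (intro divide_right_mono) auto
    also have "\<dots> \<le> max c 0 / ln (exp 1 + 1 / r)"
      using L1 L2 by (intro divide_left_mono) auto
    finally show ?thesis .
  qed
qed

lemma set_integral_const_fin:
  assumes "finite_measure M" "A \<in> sets M"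
  shows "(LINT x:A|M. (c::real)) = measure M A * c"
  using assms unfolding set_lebesgue_integral_def
  by (simp add: finite_measure.emeasure_finite)

theorem mainTheorem5:
  fixes \<alpha> q :: real and p :: "complex^'n \<Rightarrow> real"
  assumes "\<alpha> > 0" and "Plog \<alpha> p" and "ereal q > esup (mu_alpha \<alpha>) p + 1"
  shows "\<exists>C>0. \<forall>w :: complex^'n \<Rightarrow> real. weight w \<longrightarrow>
            Bq_const \<alpha> q w \<le> ennreal C * Bplus_const \<alpha> p w"
proof -
  note a0 = assms(1)
  define \<mu> where "\<mu> = (mu_alpha \<alpha> :: (complex^'n) measure)"
  have pm[measurable]: "p \<in> borel_measurable \<mu>" and ei: "essinf \<mu> p > 1"
    using assms(2) by (auto simp: Plog_def \<mu>_def)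
  obtain c where hold: "\<forall>z\<in>ball 0 1. \<forall>u\<in>ball 0 1. z \<noteq> u \<longrightarrow> \<bar>p z - p u\<bar> \<le> c / ln (exp 1 + 1 / pdist z u)"
    using assms(2) by (auto simp: Plog_def)
  define c' where "c' = max c 0"
  have c'0: "c' \<ge> 0" by (simp add: c'_def)
  have fin: "emeasure \<mu> UNIV < \<infinity>" unfolding \<mu>_def by (rule mu_alpha_finite[OF a0])
  have fm: "finite_measure \<mu>" using fin by (intro finite_measureI) (simp add: \<mu>_def)
  define Mt where "Mt = measure \<mu> UNIV"
  obtain P1 where P1: "ereal 1 < ereal P1" "ereal P1 < essinf \<mu> p"
  proof -
    have "ereal 1 < essinf \<mu> p" using ei by (simp add: one_ereal_def)
    from ereal_dense2[OF this] show ?thesis using that by blast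
  qed
  have P1g: "P1 > 1" using P1 by simp
  have AE1: "AE x in \<mu>. P1 < p x"
    using esssup_AE[where M=\<mu> and f="\<lambda>x. - ereal (p x)"]
  proof eventually_elim
    case (elim x)
    hence "essinf \<mu> p \<le> ereal (p x)" unfolding essinf_def by (simp add: ereal_uminus_le_reorder)
    with P1(2) have "ereal P1 < ereal (p x)" by (rule order.strict_trans2)
    thus ?case by simp
  qed
  have AE2: "AE x in \<mu>. p x < q - 1"
    using esssup_AE[where M=\<mu> and f="\<lambda>x. ereal (p x)"]
  proof eventually_elim
    case (elim x)
    hence "ereal (p x) \<le> esup \<mu> p" by (simp add: esup_def)
    hence "ereal (p x) + 1 \<le> esup \<mu> p + 1" by (rule add_right_mono)
    also have "\<dots> < ereal q" using assms(3) by (simp add: \<mu>_def)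
    finally show ?case by simp
  qed
  define V where "V = measure lborel (ball (0::complex^'n) 1)"
  have V0: "V > 0" unfolding V_def by (rule unit_ball_pos)
  define d where "d = DIM(complex^'n)"
  define \<beta> where "\<beta> = max 0 (\<alpha> - 1)"
  define N where "N = real d + \<beta>"
  have N0: "N \<ge> 0" by (simp add: N_def \<beta>_def)
  \<comment> \<open>a good point, to get q > 2\<close>
  have pos0: "emeasure \<mu> (pball 0 2) > 0"
  proof -
    have "0 < ennreal (V * (min 2 1 / 16) ^ d * (min 2 1 / 16) powr \<beta>)"
      using V0 by (simp add: \<beta>_def)
    also have "\<dots> \<le> emeasure \<mu> (pball 0 2)"
      unfolding \<mu>_def V_def d_def \<beta>_def by (rule pball_measure_lb) auto
    finally show ?thesis .
  qed
  have "\<exists>x. P1 < p x \<and> p x < q - 1"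
  proof (rule ccontr)
    assume nx: "\<not> ?thesis"
    have "AE x in \<mu>. P1 < p x \<and> p x < q - 1" using AE1 AE2 by eventually_elim auto
    hence "emeasure \<mu> {x \<in> space \<mu>. \<not> (P1 < p x \<and> p x < q - 1)} = 0" by (rule AE_E2)
    hence "emeasure \<mu> UNIV = 0" using nx by (simp add: \<mu>_def)
    moreover have "emeasure \<mu> (pball 0 2) \<le> emeasure \<mu> UNIV"
      by (intro emeasure_mono) (auto simp: \<mu>_def)
    ultimately show False using pos0 by simp
  qed
  hence Pq: "P1 < q - 1" by auto
  have q1: "q > 1" using Pq P1g by simp
  define E1 where "E1 = (q - 1 - P1) / (P1 - 1)"
  have E0: "E1 \<ge> 0" using Pq P1g by (simp add: E1_def)
  define C0 where "C0 = max (Mt powr E1) (exp (2 * c' / (P1 - 1) * (\<bar>ln V\<bar> + N * ln 16 + N)))"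
  have C0p: "C0 > 0" unfolding C0_def by (simp add: less_max_iff_disj)
  define C where "C = (1 + C0) powr (q - 1)"
  have Cp: "C > 0" using C0p by (simp add: C_def)
  have perball: "(wmeas \<alpha> w B / emeasure (mu_alpha \<alpha>) B) *
      epowr ((\<integral>\<^sup>+ z\<in>B. epowr (winv w z) (1 / (q - 1)) \<partial>mu_alpha \<alpha>) / emeasure (mu_alpha \<alpha>) B) (q - 1)
      \<le> ennreal C * (ennreal (measure (mu_alpha \<alpha>) B powr (- harm_mean \<alpha> p B)) * wmeas \<alpha> w B *
      vnorm (mu_alpha \<alpha>) (\<lambda>z. conj_exp p z / p z) (\<lambda>z. indicator B z * winv w z))"
    if wt: "weight w" and BB: "B \<in> bdry_balls" for w B
  proof -
    obtain z0 r where Bdef: "B = pball z0 r" and z0: "z0 \<in> ball 0 1" and rz: "r > 1 - norm z0"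
      using BB by (auto simp: bdry_balls_def)
    have z0n: "norm z0 < 1" using z0 by simp
    have r0: "r > 0" using z0n rz by simp
    have Bs[measurable]: "B \<in> sets \<mu>" using pball_sets by (simp add: Bdef \<mu>_def)
    define m where "m = measure \<mu> B"
    have Bfin: "emeasure \<mu> B \<noteq> \<infinity>" using fm by (simp add: finite_measure.emeasure_finite)
    have mB: "emeasure \<mu> B = ennreal m" using Bfin by (simp add: m_def emeasure_eq_ennreal_measure)
    define \<rho> where "\<rho> = min r 1"
    have rho: "0 < \<rho>" "\<rho> \<le> 1" using r0 by (auto simp: \<rho>_def)
    have lbm: "V * (\<rho> / 16) powr N \<le> m"
    proof -
      have "(\<rho>/16) powr N = (\<rho>/16) ^ d * (\<rho>/16) powr \<beta>"
        using rho by (simp add: N_def powr_add powr_realpow)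
      hence "ennreal (V * (\<rho> / 16) powr N) \<le> emeasure \<mu> B"
        using pball_measure_lb[OF z0n rz, of \<alpha>]
        by (simp add: Bdef \<mu>_def V_def d_def \<beta>_def \<rho>_def mult.assoc)
      moreover have "m \<ge> 0" by (simp add: m_def)
      ultimately show ?thesis using mB by (simp add: ennreal_le_iff)
    qed
    have "0 < V * (\<rho> / 16) powr N" using V0 rho by simp
    hence m0: "m > 0" using lbm by linarith
    have mMt: "m \<le> Mt" unfolding m_def Mt_def using fm by (intro finite_measure.finite_measure_mono) (auto simp: \<mu>_def)
    define L where "L = ln (exp 1 + 1 / r)"
    have L1: "1 \<le> L"
    proof -
      have "ln (exp 1) \<le> ln (exp 1 + 1 / r)" using r0 by (subst ln_le_cancel_iff) (auto intro: add_pos_nonneg)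
      thus ?thesis by (simp add: L_def)
    qed
    have lnr: "ln (1 / \<rho>) \<le> L"
    proof (cases "r \<ge> 1")
      case True thus ?thesis using L1 by (simp add: \<rho>_def)
    next
      case False
      have "ln (1 / r) \<le> ln (exp 1 + 1 / r)" using r0 by (subst ln_le_cancel_iff) (auto intro: add_pos_pos)
      thus ?thesis using False by (simp add: \<rho>_def L_def)
    qed
    define \<eta> where "\<eta> = c' / L"
    have eta0: "\<eta> \<ge> 0" using c'0 L1 by (simp add: \<eta>_def)
    have oscB: "\<bar>p u - p z0\<bar> \<le> \<eta>" if "u \<in> B" for u
      using osc[OF hold z0] that by (simp add: Bdef \<eta>_def c'_def L_def)
    have AE1B: "AE u in \<mu>. u \<in> B \<longrightarrow> P1 < p u \<and> p u < q - 1" using AE1 AE2 by eventually_elim auto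
    have int_inv: "set_integrable \<mu> B (\<lambda>u. 1 / p u)"
      unfolding set_integrable_def
    proof (rule finite_measure.integrable_const_bound[OF fm, where B=1])
      show "AE x in \<mu>. norm (indicator B x *\<^sub>R (1 / p x)) \<le> 1"
        using AE1 by eventually_elim (insert P1g, auto simp: indicator_def)
    qed measurable
    have int_c: "set_integrable \<mu> B (\<lambda>u. k)" for k :: real
      unfolding set_integrable_def
      by (rule finite_measure.integrable_const_bound[OF fm, where B="\<bar>k\<bar>"]) (auto simp: indicator_def)
    define I where "I = (LINT u:B|\<mu>. 1 / p u)"
    define pB where "pB = harm_mean \<alpha> p B"
    have pB_eq: "pB = inverse (1 / m * I)" by (simp add: pB_def harm_mean_def I_def m_def \<mu>_def)
    have H: "AE z in \<mu>. z \<in> B \<longrightarrow> m powr ((pB - 1) / (p z - 1)) \<le> C0 * m"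
      using AE1B
    proof eventually_elim
      case (elim z)
      show ?case
      proof
        assume zB: "z \<in> B"
        have pz: "P1 < p z" "p z < q - 1" using elim zB by auto
        define L' where "L' = max P1 (p z - 2 * \<eta>)"
        have L'0: "L' > 0" using P1g by (simp add: L'_def less_max_iff_disj)
        have Iup: "I \<le> m * (1 / L')"
        proof -
          have "I \<le> (LINT u:B|\<mu>. 1 / L')"
            unfolding I_def
          proof (rule set_integral_mono_AE[OF int_inv int_c])
            show "AE u\<in>B in \<mu>. 1 / p u \<le> 1 / L'"
              using AE1B
            proof eventually_elim
              case (elim u)
              show ?case
              proof
                assume uB: "u \<in> B"
                have "p u \<ge> p z - 2 * \<eta>" using oscB[OF uB] oscB[OF zB] by linarith
                moreover have "p u > P1" using elim uB by auto
                ultimately have "L' \<le> p u" by (simp add: L'_def)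
                thus "1 / p u \<le> 1 / L'" using L'0 by (intro divide_left_mono) auto
              qed
            qed
          qed
          also have "\<dots> = m * (1 / L')" using fm by (simp add: set_integral_const_fin m_def)
          finally show ?thesis .
        qed
        have Ilo: "m * (1 / (q - 1)) \<le> I"
        proof -
          have "m * (1 / (q - 1)) = (LINT u:B|\<mu>. 1 / (q - 1))" using fm by (simp add: set_integral_const_fin m_def)
          also have "\<dots> \<le> I"
            unfolding I_def
          proof (rule set_integral_mono_AE[OF int_c int_inv])
            show "AE u\<in>B in \<mu>. 1 / (q - 1) \<le> 1 / p u"
              using AE1B
            proof eventually_elim
              case (elim u)
              show ?case using elim P1g by (auto intro!: divide_left_mono)
            qed
          qed
          finally show ?thesis .
        qed
        have A0: "1 / m * I > 0" using Ilo m0 q1 by (smt (verit) divide_pos_pos mult_pos_pos)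
        have pBlo: "pB \<ge> L'"
        proof -
          have "1 / m * I \<le> 1 / L'" using Iup m0 by (simp add: field_simps)
          hence "inverse (1 / L') \<le> inverse (1 / m * I)" using A0 by (intro le_imp_inverse_le) auto
          thus ?thesis using L'0 by (simp add: pB_eq)
        qed
        have pBhi: "pB \<le> q - 1"
        proof -
          have "1 / (q - 1) \<le> 1 / m * I" using Ilo m0 by (simp add: field_simps)
          hence "inverse (1 / m * I) \<le> inverse (1 / (q - 1))" using q1 by (intro le_imp_inverse_le) auto
          thus ?thesis using q1 by (simp add: pB_eq)
        qed
        define e where "e = (pB - p z) / (p z - 1)"
        have pz1: "p z - 1 \<ge> P1 - 1" "P1 - 1 > 0" using pz P1g by auto
        have elo: "- (2 * (c' / L) / (P1 - 1)) \<le> e"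
        proof -
          have num: "pB - p z \<ge> - 2 * \<eta>" using pBlo by (simp add: L'_def)
          have "- (2 * \<eta>) / (P1 - 1) \<le> - (2 * \<eta>) / (p z - 1)"
            using pz1 eta0 by (intro divide_left_mono_neg) auto
          also have "\<dots> \<le> e" unfolding e_def using num pz1 by (intro divide_right_mono) auto
          finally show ?thesis by (simp add: \<eta>_def)
        qed
        have ehi: "e \<le> E1"
        proof (cases "pB - p z \<ge> 0")
          case True
          have "e \<le> (pB - p z) / (P1 - 1)" unfolding e_def using True pz1 by (intro divide_left_mono) auto
          also have "\<dots> \<le> E1" unfolding E1_def using pBhi pz pz1 by (intro divide_right_mono) auto
          finally show ?thesis .
        next
          case False
          hence "e \<le> 0" unfolding e_def using pz1 by (simp add: divide_nonpos_pos)
          thus ?thesis using E0 by simp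
        qed
        have "m powr e \<le> C0"
          unfolding C0_def
          by (rule exp_bound[OF m0 mMt V0 rho(1) rho(2) lbm N0 L1 lnr c'0 P1g elo ehi E0])
        moreover have "(pB - 1) / (p z - 1) = 1 + e" using pz1 by (simp add: e_def field_simps)
        ultimately show "m powr ((pB - 1) / (p z - 1)) \<le> C0 * m"
          using m0 by (simp add: powr_add mult.commute)
      qed
    qed
    have "(borel_measurable \<mu> :: (complex^'n \<Rightarrow> real) set) = borel_measurable lebesgue"
      by (rule measurable_cong_sets) (auto simp: \<mu>_def)
    hence wm: "w \<in> borel_measurable \<mu>" using wt by (simp add: weight_def)
    have wpos: "\<And>z. 0 \<le> w z" using wt by (simp add: weight_def)
    have pAE: "AE z in \<mu>. z \<in> B \<longrightarrow> 1 < p z \<and> p z \<le> q" using AE1B by eventually_elim (insert P1g, auto)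
    have "(wmeas \<alpha> w B / emeasure \<mu> B) *
      epowr ((\<integral>\<^sup>+ z\<in>B. epowr (winv w z) (1 / (q - 1)) \<partial>\<mu>) / emeasure \<mu> B) (q - 1)
      \<le> ennreal ((1 + C0) powr (q - 1)) * (ennreal (m powr (- pB)) * wmeas \<alpha> w B *
      vnorm \<mu> (\<lambda>z. conj_exp p z / p z) (\<lambda>z. indicator B z * winv w z))"
      unfolding wmeas_def \<mu>_def[symmetric]
      by (rule ball_main[OF Bs mB m0 pm wm wpos q1 pAE C0p H])
    thus ?thesis by (simp add: \<mu>_def C_def m_def pB_def)
  qed
  show ?thesis
  proof (intro exI[of _ C] conjI allI impI Cp)
    fix w :: "complex^'n \<Rightarrow> real" assume wt: "weight w"
    show "Bq_const \<alpha> q w \<le> ennreal C * Bplus_const \<alpha> p w"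
      unfolding Bq_const_def
    proof (rule SUP_least)
      fix B :: "(complex^'n) set" assume BB: "B \<in> bdry_balls"
      have "ennreal (measure (mu_alpha \<alpha>) B powr (- harm_mean \<alpha> p B)) * wmeas \<alpha> w B *
          vnorm (mu_alpha \<alpha>) (\<lambda>z. conj_exp p z / p z) (\<lambda>z. indicator B z * winv w z) \<le> Bplus_const \<alpha> p w"
        unfolding Bplus_const_def using BB by (rule SUP_upper)
      hence "ennreal C * (ennreal (measure (mu_alpha \<alpha>) B powr (- harm_mean \<alpha> p B)) * wmeas \<alpha> w B *
          vnorm (mu_alpha \<alpha>) (\<lambda>z. conj_exp p z / p z) (\<lambda>z. indicator B z * winv w z)) \<le> ennreal C * Bplus_const \<alpha> p w"
        by (rule mult_left_mono) simp
      with perball[OF wt BB] show "(wmeas \<alpha> w B / emeasure (mu_alpha \<alpha>) B) *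
          epowr ((\<integral>\<^sup>+ z\<in>B. epowr (winv w z) (1 / (q - 1)) \<partial>mu_alpha \<alpha>) / emeasure (mu_alpha \<alpha>) B) (q - 1)
          \<le> ennreal C * Bplus_const \<alpha> p w" by (rule order_trans)
    qed
  qed
qed

end
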